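(* Let $\mathcal{N}$ be a von Neumann algebra with projection lattice $\mathcal{P}(\mathcal{N})$, and let $\mathcal{T}\subseteq\mathcal{N}$ be a von Neumann subalgebra whose unit coincides with the unit $\hat 1$ of $\mathcal{N}$, with projection lattice $\mathcal{P}(\mathcal{T})$. Define $$\delta^i_{\mathcal{T}}:\mathcal{P}(\mathcal{N})\to\mathcal{P}(\mathcal{T}),\qquad \hat P\mapsto \bigvee\{\hat Q\in\mathcal{P}(\mathcal{T})\mid \hat Q\le\hat P\}.$$ Then for every (proper) filter $F$ in $\mathcal{P}(\mathcal{T})$, $$(\delta^i_{\mathcal{T}})^{-1}(F)=\mathcal{C}_{\mathcal{N}}(F),\qquad\text{where } \mathcal{C}_{\mathcal{N}}(F):=\{\hat Q\in\mathcal{P}(\mathcal{N})\mid \exists\,\hat P\in F:\ \hat P\le\hat Q\}.$$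
   Context: Projections are ordered by $\hat P\le\hat Q$ iff $\hat P\hat Q=\hat P$ (inclusion of ranges); the projection lattice of a von Neumann algebra is complete, so the join above exists. A (proper) filter in a lattice $\mathbb{L}$ with least element $0$ is a subset $F\subseteq\mathbb{L}$ such that (i) $0\notin F$, (ii) $a,b\in F$ implies $a\wedge b\in F$, and (iii) $a\in F$ and $b\ge a$ imply $b\in F$. The set $\mathcal{C}_{\mathcal{N}}(F)$ is called the $\mathcal{N}$-cone over $F$. *)

theory Defs
  imports Complex_Main
begin

text \<open>Complex Hilbert spaces: a real Banach space carrying a complex scalar
multiplication extending the real one, and a complex inner product (conjugate-linear
in the first argument, linear in the second) inducing the norm.\<close>

class complex_hilbert = banach +
  fixes cscale :: "complex \<Rightarrow> 'a \<Rightarrow> 'a"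
    and cinner :: "'a \<Rightarrow> 'a \<Rightarrow> complex"
  assumes cscale_of_real: "cscale (complex_of_real r) x = scaleR r x"
    and cscale_add_left: "cscale (a + b) x = cscale a x + cscale b x"
    and cscale_add_right: "cscale a (x + y) = cscale a x + cscale a y"
    and cscale_cscale: "cscale a (cscale b x) = cscale (a * b) x"
    and cinner_commute: "cinner x y = cnj (cinner y x)"
    and cinner_add_left: "cinner (x + y) z = cinner x z + cinner y z"
    and cinner_cscale_left: "cinner (cscale a x) y = cnj a * cinner x y"
    and cinner_norm: "cinner x x = complex_of_real ((norm x)\<^sup>2)"

definition bounded_op :: "('a::complex_hilbert \<Rightarrow> 'a) \<Rightarrow> bool" where
  "bounded_op A \<longleftrightarrow>
     (\<forall>x y. A (x + y) = A x + A y) \<and> (\<forall>c x. A (cscale c x) = cscale c (A x)) \<and>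
     (\<exists>K. \<forall>x. norm (A x) \<le> K * norm x)"

definition is_adjoint :: "('a::complex_hilbert \<Rightarrow> 'a) \<Rightarrow> ('a \<Rightarrow> 'a) \<Rightarrow> bool" where
  "is_adjoint A B \<longleftrightarrow> (\<forall>x y. cinner (A x) y = cinner x (B y))"

definition commutant :: "('a::complex_hilbert \<Rightarrow> 'a) set \<Rightarrow> ('a \<Rightarrow> 'a) set" where
  "commutant S = {B. bounded_op B \<and> (\<forall>A\<in>S. A \<circ> B = B \<circ> A)}"

text \<open>Von Neumann algebra on H: a self-adjoint set of bounded operators equal to its
bicommutant (hence a unital *-algebra with unit the identity of H, weak-operator closed).\<close>
definition von_neumann_algebra :: "('a::complex_hilbert \<Rightarrow> 'a) set \<Rightarrow> bool" where
  "von_neumann_algebra N \<longleftrightarrow>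
     (\<forall>A\<in>N. bounded_op A) \<and> (\<forall>A\<in>N. \<exists>B\<in>N. is_adjoint A B) \<and>
     N = commutant (commutant N)"

definition proj_lattice :: "('a::complex_hilbert \<Rightarrow> 'a) set \<Rightarrow> ('a \<Rightarrow> 'a) set" where
  "proj_lattice N = {P\<in>N. P \<circ> P = P \<and> is_adjoint P P}"

definition proj_le :: "('a::complex_hilbert \<Rightarrow> 'a) \<Rightarrow> ('a \<Rightarrow> 'a) \<Rightarrow> bool" where
  "proj_le P Q \<longleftrightarrow> P \<circ> Q = P"

definition proj_join :: "('a::complex_hilbert \<Rightarrow> 'a) set \<Rightarrow> ('a \<Rightarrow> 'a) set \<Rightarrow> ('a \<Rightarrow> 'a)" where
  "proj_join L S = (THE R. R \<in> L \<and> (\<forall>Q\<in>S. proj_le Q R) \<and>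
                          (\<forall>R'\<in>L. (\<forall>Q\<in>S. proj_le Q R') \<longrightarrow> proj_le R R'))"

definition proj_meet :: "('a::complex_hilbert \<Rightarrow> 'a) set \<Rightarrow> ('a \<Rightarrow> 'a) \<Rightarrow> ('a \<Rightarrow> 'a) \<Rightarrow> ('a \<Rightarrow> 'a)" where
  "proj_meet L P Q = (THE R. R \<in> L \<and> proj_le R P \<and> proj_le R Q \<and>
                          (\<forall>R'\<in>L. proj_le R' P \<and> proj_le R' Q \<longrightarrow> proj_le R' R))"

text \<open>Proper filter in the projection lattice L (least element: the zero operator).\<close>
definition proj_filter :: "('a::complex_hilbert \<Rightarrow> 'a) set \<Rightarrow> ('a \<Rightarrow> 'a) set \<Rightarrow> bool" where
  "proj_filter L F \<longleftrightarrow>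
     F \<subseteq> L \<and> (\<lambda>_. 0) \<notin> F \<and>
     (\<forall>a\<in>F. \<forall>b\<in>F. proj_meet L a b \<in> F) \<and>
     (\<forall>a\<in>F. \<forall>b\<in>L. proj_le a b \<longrightarrow> b \<in> F)"

definition delta_i :: "('a::complex_hilbert \<Rightarrow> 'a) set \<Rightarrow> ('a \<Rightarrow> 'a) \<Rightarrow> ('a \<Rightarrow> 'a)" where
  "delta_i T P = proj_join (proj_lattice T) {Q \<in> proj_lattice T. proj_le Q P}"

definition cone :: "('a::complex_hilbert \<Rightarrow> 'a) set \<Rightarrow> ('a \<Rightarrow> 'a) set \<Rightarrow> ('a \<Rightarrow> 'a) set" where
  "cone N F = {Q \<in> proj_lattice N. \<exists>P\<in>F. proj_le P Q}"

end

theory Submission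
  imports Defs
begin


lemma ci_zero_left[simp]: "cinner (0::'a::complex_hilbert) y = 0"
  using cinner_add_left[of "0::'a" 0 y] by simp
lemma ci_add_right: "cinner (x::'a::complex_hilbert) (y+z) = cinner x y + cinner x z"
  by (metis cinner_commute cinner_add_left complex_cnj_add)
lemma ci_zero_right[simp]: "cinner (x::'a::complex_hilbert) 0 = 0"
  by (metis ci_zero_left cinner_commute complex_cnj_zero)
lemma ci_cscale_right: "cinner (x::'a::complex_hilbert) (cscale a y) = a * cinner x y"
  by (metis cinner_commute cinner_cscale_left complex_cnj_cnj complex_cnj_mult)
lemma ci_minus_left: "cinner (- (x::'a::complex_hilbert)) y = - cinner x y"
  using cinner_add_left[of x "-x" y] by (simp add: add_eq_0_iff)
lemma ci_diff_left: "cinner ((x::'a::complex_hilbert) - z) y = cinner x y - cinner z y"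
  using cinner_add_left[of x "-z" y] ci_minus_left[of z y] by simp
lemma ci_minus_right: "cinner (x::'a::complex_hilbert) (- y) = - cinner x y"
  by (metis ci_minus_left cinner_commute complex_cnj_minus)
lemma ci_diff_right: "cinner (x::'a::complex_hilbert) (y - z) = cinner x y - cinner x z"
  by (metis ci_diff_left cinner_commute complex_cnj_diff)
lemma ci_scaleR_right: "cinner (x::'a::complex_hilbert) (r *\<^sub>R y) = of_real r * cinner x y"
  by (metis ci_cscale_right cscale_of_real)
lemma ci_self_zero: "cinner (x::'a::complex_hilbert) x = 0 \<longleftrightarrow> x = 0"
  by (simp add: cinner_norm)
lemma cs_zero[simp]: "cscale a (0::'a::complex_hilbert) = 0"
  using cscale_add_right[of a "0::'a" 0] by simp
lemma cs_diff: "cscale a ((x::'a::complex_hilbert) - y) = cscale a x - cscale a y"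
  using cscale_add_right[of a "x-y" y] by (simp add: eq_diff_eq)

lemma norm_add_sq: "norm ((x::'a::complex_hilbert) + y)^2 = norm x^2 + norm y^2 + 2 * Re (cinner x y)"
proof -
  have "complex_of_real (norm (x+y)^2) = cinner (x+y) (x+y)" by (simp add: cinner_norm)
  also have "\<dots> = cinner x x + cinner y y + (cinner x y + cnj (cinner x y))"
    by (simp add: cinner_add_left ci_add_right cinner_commute[of y x])
  finally have "norm (x+y)^2 = Re (cinner x x + cinner y y + (cinner x y + cnj (cinner x y)))"
    by (metis Re_complex_of_real)
  then show ?thesis by (simp add: cinner_norm)
qed

lemma norm_diff_sq: "norm ((x::'a::complex_hilbert) - y)^2 = norm x^2 + norm y^2 - 2 * Re (cinner x y)"
  using norm_add_sq[of x "-y"] by (simp add: ci_minus_right)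

definition subsp :: "('a::complex_hilbert) set \<Rightarrow> bool" where
  "subsp K \<longleftrightarrow> 0 \<in> K \<and> (\<forall>x\<in>K. \<forall>y\<in>K. x + y \<in> K) \<and> (\<forall>c. \<forall>x\<in>K. cscale c x \<in> K)"

lemma subsp_scaleR: "subsp K \<Longrightarrow> x \<in> K \<Longrightarrow> r *\<^sub>R x \<in> K"
  by (metis cscale_of_real subsp_def)
lemma subsp_diff: "subsp K \<Longrightarrow> x \<in> K \<Longrightarrow> y \<in> K \<Longrightarrow> x - y \<in> K"
  using subsp_scaleR[of K y "-1"] by (metis diff_conv_add_uminus scaleR_minus1_left subsp_def)

lemma quad_aux:
  fixes a n :: real
  assumes h: "\<And>t. 2 * t * a \<le> t^2 * n" and "0 \<le> n"
  shows "a = 0"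
proof -
  have a1: "2 * (a/(n+1)) * a \<le> (a/(n+1))^2 * n" using h .
  have p: "0 < n + 1" using assms(2) by simp
  have "2 * (a/(n+1)) * a * (n+1)^2 \<le> (a/(n+1))^2 * n * (n+1)^2"
    using mult_right_mono[OF a1, of "(n+1)^2"] by simp
  moreover have "2 * (a/(n+1)) * a * (n+1)^2 = 2*a*a*(n+1)" using p by (simp add: power2_eq_square field_simps)
  moreover have "(a/(n+1))^2 * n * (n+1)^2 = a*a*n" using p by (simp add: power_divide power2_eq_square)
  ultimately have "2*a*a*(n+1) \<le> a*a*n" by simp
  then have "a*a*(n+2) \<le> 0" by (simp add: algebra_simps)
  then show ?thesis using assms(2)
    by (smt (verit) mult_pos_pos zero_less_mult_iff)
qed



lemma proj_exists:
  fixes K :: "'a::complex_hilbert set"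
  assumes cl: "closed K" and sK: "subsp K"
  shows "\<exists>k\<in>K. \<forall>w\<in>K. cinner w (x - k) = 0"
proof -
  have K0: "0 \<in> K" using sK by (simp add: subsp_def)
  have Kadd: "\<And>a b. a \<in> K \<Longrightarrow> b \<in> K \<Longrightarrow> a + b \<in> K" using sK by (simp add: subsp_def)
  have Kcs: "\<And>c a. a \<in> K \<Longrightarrow> cscale c a \<in> K" using sK by (simp add: subsp_def)
  define D where "D = (\<lambda>k. norm (x - k)) ` K"
  define d where "d = Inf D"
  have Dne: "D \<noteq> {}" using K0 by (auto simp: D_def)
  have bdd: "bdd_below D" unfolding D_def by (rule bdd_belowI[of _ 0]) auto
  have dle: "\<And>k. k \<in> K \<Longrightarrow> d \<le> norm (x - k)"
    unfolding d_def by (rule cInf_lower[OF _ bdd]) (simp add: D_def)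
  have d0: "0 \<le> d" unfolding d_def by (rule cInf_greatest[OF Dne]) (auto simp: D_def)
  have "\<forall>n::nat. \<exists>k. k \<in> K \<and> norm (x - k) < d + inverse (real (Suc n))"
  proof
    fix n :: nat
    have "Inf D < d + inverse (real (Suc n))" by (simp add: d_def)
    from cInf_lessD[OF Dne this] show "\<exists>k. k \<in> K \<and> norm (x - k) < d + inverse (real (Suc n))"
      by (auto simp: D_def)
  qed
  then obtain ks where ks: "\<And>n. ks n \<in> K" "\<And>n. norm (x - ks n) < d + inverse (real (Suc n))"
    by metis
  define e where "e = (\<lambda>n::nat. inverse (real (Suc n)))"
  have e0: "\<And>n. 0 < e n" by (auto simp: e_def)
  have e1: "\<And>n. e n \<le> 1" by (simp add: e_def inverse_le_1_iff)
  have key: "\<And>n m. norm (ks n - ks m)^2 \<le> (4*d+2) * (e n + e m)"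
  proof -
    fix n m
    define a where "a = x - ks n"
    define b where "b = x - ks m"
    define mid where "mid = (1/2::real) *\<^sub>R (ks n + ks m)"
    have midK: "mid \<in> K" unfolding mid_def by (intro subsp_scaleR[OF sK] Kadd ks)
    have par: "norm (a+b)^2 + norm (a-b)^2 = 2 * norm a^2 + 2 * norm b^2"
      using norm_add_sq[of a b] norm_diff_sq[of a b] by simp
    have "a + b = 2 *\<^sub>R (x - mid)" by (simp add: a_def b_def mid_def algebra_simps scaleR_2)
    then have nab: "norm (a + b) = 2 * norm (x - mid)" by simp
    have "2 * d \<le> norm (a+b)" using dle[OF midK] nab by simp
    then have "(2*d)^2 \<le> norm (a+b)^2" using d0 by (intro power_mono) auto
    moreover have "norm (a-b) = norm (ks n - ks m)" by (simp add: a_def b_def norm_minus_commute)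
    moreover have "norm a^2 \<le> (d + e n)^2" using ks(2)[of n] by (intro power_mono) (auto simp: a_def e_def)
    moreover have "norm b^2 \<le> (d + e m)^2" using ks(2)[of m] by (intro power_mono) (auto simp: b_def e_def)
    moreover have "(e n)^2 \<le> e n" "(e m)^2 \<le> e m" using e0 e1
      by (simp_all add: power2_eq_square mult_left_le)
    ultimately show "norm (ks n - ks m)^2 \<le> (4*d+2) * (e n + e m)"
      using par by (simp add: power2_sum algebra_simps)
  qed
  have "Cauchy ks"
  proof (rule metric_CauchyI)
    fix r :: real assume r: "0 < r"
    obtain M :: nat where M: "(4*d+2)*2 / r^2 < real M" using reals_Archimedean2 by blast
    show "\<exists>M. \<forall>m\<ge>M. \<forall>n\<ge>M. dist (ks m) (ks n) < r"
    proof (intro exI allI impI)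
      fix m n assume mn: "M \<le> m" "M \<le> n"
      have em: "e m \<le> e M" "e n \<le> e M" using mn by (auto simp: e_def field_simps)
      have "norm (ks m - ks n)^2 \<le> (4*d+2) * (e m + e n)" by (rule key)
      also have "\<dots> \<le> (4*d+2) * (2 * e M)" using em d0 by (intro mult_left_mono) auto
      also have "\<dots> < r^2"
      proof -
        have "(4*d+2)*2 < r^2 * real (Suc M)" using M r
        proof -
          have "(4*d+2)*2 < real M * r^2" using M r by (simp add: divide_less_eq mult.commute)
          also have "\<dots> \<le> real (Suc M) * r^2" using r by (intro mult_right_mono) auto
          finally show ?thesis by (simp add: mult.commute)
        qed
        then show ?thesis using r by (simp add: e_def field_simps)
      qed
      finally have "norm (ks m - ks n)^2 < r^2" .
      then have "norm (ks m - ks n) < r" using r by (simp add: power_less_imp_less_base)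
      then show "dist (ks m) (ks n) < r" by (simp add: dist_norm)
    qed
  qed
  then obtain k where lim: "ks \<longlonglongrightarrow> k" using Cauchy_convergent convergent_def by blast
  have kK: "k \<in> K" using closed_sequentially[OF cl ks(1) lim] .
  have kmin: "\<And>w. w \<in> K \<Longrightarrow> norm (x - k) \<le> norm (x - w)"
  proof -
    fix w assume w: "w \<in> K"
    have l1: "(\<lambda>n. norm (x - ks n)) \<longlonglongrightarrow> norm (x - k)" by (intro tendsto_intros lim)
    have l2: "(\<lambda>n. d + inverse (real (Suc n))) \<longlonglongrightarrow> d + 0"
      by (intro tendsto_intros LIMSEQ_inverse_real_of_nat)
    have "norm (x - k) \<le> d + 0"
      by (rule LIMSEQ_le[OF l1 l2]) (metis less_imp_le ks(2))
    then show "norm (x - k) \<le> norm (x - w)" using dle[OF w] by simp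
  qed
  define y where "y = x - k"
  have re0: "\<And>w. w \<in> K \<Longrightarrow> Re (cinner y w) = 0"
  proof -
    fix w assume w: "w \<in> K"
    show "Re (cinner y w) = 0"
    proof (rule quad_aux)
      show "0 \<le> norm w ^ 2" by simp
      fix t :: real
      have "k + t *\<^sub>R w \<in> K" by (intro Kadd kK subsp_scaleR[OF sK] w)
      from kmin[OF this] have "norm y \<le> norm (y - t *\<^sub>R w)" by (simp add: y_def algebra_simps)
      then have "norm y ^2 \<le> norm (y - t *\<^sub>R w)^2" by (intro power_mono) auto
      also have "\<dots> = norm y^2 + t^2 * norm w ^2 - 2 * t * Re (cinner y w)"
        by (simp add: norm_diff_sq ci_scaleR_right power_mult_distrib)
      finally show "2 * t * Re (cinner y w) \<le> t^2 * norm w ^2" by simp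
    qed
  qed
  have "\<forall>w\<in>K. cinner w y = 0"
  proof
    fix w assume w: "w \<in> K"
    have "Re (cinner y (cscale \<i> w)) = 0" by (rule re0[OF Kcs[OF w]])
    then have im: "Im (cinner y w) = 0" by (simp add: ci_cscale_right)
    have "cinner y w = 0" using re0[OF w] im by (simp add: complex_eq_iff)
    then show "cinner w y = 0" by (metis cinner_commute complex_cnj_zero)
  qed
  then show ?thesis using kK by (auto simp: y_def)
qed



definition proj :: "'a::complex_hilbert set \<Rightarrow> 'a \<Rightarrow> 'a" where
  "proj K x = (SOME k. k \<in> K \<and> (\<forall>w\<in>K. cinner w (x - k) = 0))"

lemma proj_props:
  assumes "closed K" "subsp K"
  shows "proj K x \<in> K" "\<And>w. w \<in> K \<Longrightarrow> cinner w (x - proj K x) = 0"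
proof -
  have "\<exists>k. k \<in> K \<and> (\<forall>w\<in>K. cinner w (x - k) = 0)" using proj_exists[OF assms] by blast
  from someI_ex[OF this] show "proj K x \<in> K" "\<And>w. w \<in> K \<Longrightarrow> cinner w (x - proj K x) = 0"
    unfolding proj_def by blast+
qed

lemma proj_unique:
  assumes "closed K" "subsp K" "k \<in> K" "\<forall>w\<in>K. cinner w (x - k) = 0"
  shows "proj K x = k"
proof -
  let ?p = "proj K x"
  have w: "?p - k \<in> K" using subsp_diff[OF assms(2) proj_props(1)[OF assms(1,2)] assms(3)] .
  have "cinner (?p - k) (?p - k) = cinner (?p - k) (x - k) - cinner (?p - k) (x - ?p)"
    by (metis ci_diff_right diff_diff_eq2 diff_add_cancel add_diff_cancel_left')
  also have "\<dots> = 0" using assms(4) w proj_props(2)[OF assms(1,2) w] by simp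
  finally show ?thesis by (simp add: ci_self_zero)
qed

lemma riesz:
  fixes g :: "'a::complex_hilbert \<Rightarrow> complex"
  assumes add: "\<And>x y. g (x+y) = g x + g y" and sc: "\<And>c x. g (cscale c x) = c * g x"
    and cl: "closed {x. g x = 0}"
  shows "\<exists>z. \<forall>x. g x = cinner z x"
proof (cases "\<forall>x. g x = 0")
  case True then show ?thesis by (intro exI[of _ 0]) simp
next
  case False
  then obtain x0 where x0: "g x0 \<noteq> 0" by blast
  define Z where "Z = {x. g x = 0}"
  have g0: "g 0 = 0" using add[of 0 0] by simp
  have gdiff: "\<And>a b. g (a - b) = g a - g b" by (metis add diff_add_cancel eq_diff_eq)
  have sZ: "subsp Z" unfolding subsp_def Z_def using g0 add sc by simp
  have cZ: "closed Z" using cl by (simp add: Z_def)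
  define u where "u = x0 - proj Z x0"
  have gu: "g u \<noteq> 0" using x0 proj_props(1)[OF cZ sZ, of x0] by (simp add: u_def gdiff Z_def)
  have orth: "\<And>w. w \<in> Z \<Longrightarrow> cinner w u = 0" using proj_props(2)[OF cZ sZ] by (simp add: u_def)
  have u0: "u \<noteq> 0" using gu g0 by auto
  have uu: "cinner u u \<noteq> 0" using u0 by (simp add: ci_self_zero)
  show ?thesis
  proof (intro exI allI)
    fix x
    define v where "v = cscale (g x) u - cscale (g u) x"
    have "v \<in> Z" by (simp add: Z_def v_def gdiff sc)
    then have "cinner v u = 0" by (rule orth)
    then have "cinner u v = 0" by (metis cinner_commute complex_cnj_zero)
    then have "g x * cinner u u = g u * cinner u x" by (simp add: v_def ci_diff_right ci_cscale_right)
    then have "g x = g u / cinner u u * cinner u x" using uu by (simp add: field_simps)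
    then show "g x = cinner (cscale (cnj (g u / cinner u u)) u) x" by (simp add: cinner_cscale_left)
  qed
qed

lemma re_cinner_norm: "Re (cinner (w::'a::complex_hilbert) v) = (norm (w+v)^2 - norm (w-v)^2) / 4"
  by (simp add: norm_add_sq norm_diff_sq)

lemma im_cinner_norm: "Im (cinner (w::'a::complex_hilbert) v) = (norm (cscale \<i> w + v)^2 - norm (cscale \<i> w - v)^2) / 4"
  by (simp add: re_cinner_norm[symmetric] cinner_cscale_left)

lemma bop_bl: "bounded_op A \<Longrightarrow> bounded_linear A"
  unfolding bounded_op_def
proof (elim conjE exE)
  fix K assume a: "\<forall>x y. A (x + y) = A x + A y" and c: "\<forall>c x. A (cscale c x) = cscale c (A x)"
    and K: "\<forall>x. norm (A x) \<le> K * norm x"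
  show "bounded_linear A"
  proof (rule bounded_linear_intro[of _ K])
    show "\<And>x y. A (x + y) = A x + A y" using a by blast
    show "\<And>r x. A (r *\<^sub>R x) = r *\<^sub>R A x" using c by (metis cscale_of_real)
    show "\<And>x. norm (A x) \<le> norm x * K" using K by (simp add: mult.commute)
  qed
qed

lemma bl_zero: "bounded_linear f \<Longrightarrow> f 0 = 0"
  by (simp add: linear_0 bounded_linear.linear)
lemma bl_add: "bounded_linear f \<Longrightarrow> f (x + y) = f x + f y"
  by (simp add: linear_add bounded_linear.linear)
lemma bl_diff: "bounded_linear f \<Longrightarrow> f (x - y) = f x - f y"
  by (simp add: linear_diff bounded_linear.linear)

lemma closed_ker_inner:
  assumes "bounded_linear (B::'a::complex_hilbert \<Rightarrow> 'a)"
  shows "closed {x. cinner w (B x) = 0}"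
proof -
  have cB: "continuous_on UNIV B" using bounded_linear.continuous_on[OF assms continuous_on_id] by simp
  have "{x. cinner w (B x) = 0} = {x. Re (cinner w (B x)) = 0} \<inter> {x. Im (cinner w (B x)) = 0}"
    by (auto simp: complex_eq_iff)
  moreover have "closed {x. Re (cinner w (B x)) = 0}"
    unfolding re_cinner_norm by (intro closed_Collect_eq continuous_intros cB) auto
  moreover have "closed {x. Im (cinner w (B x)) = 0}"
    unfolding im_cinner_norm by (intro closed_Collect_eq continuous_intros cB) auto
  ultimately show ?thesis by auto
qed



lemma join_exists:
  fixes T S :: "('a::complex_hilbert \<Rightarrow> 'a) set"
  assumes vT: "von_neumann_algebra T" and SL: "S \<subseteq> proj_lattice T"
  shows "\<exists>R\<in>proj_lattice T. (\<forall>Q\<in>S. proj_le Q R) \<and>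
     (\<forall>P. (\<forall>x y. P (x+y) = P x + P y) \<and> (\<forall>Q\<in>S. proj_le Q P) \<longrightarrow> proj_le R P)"
proof -
  have Teq: "T = commutant (commutant T)" using vT by (simp add: von_neumann_algebra_def)
  have ST: "S \<subseteq> T" using SL by (auto simp: proj_lattice_def)
  have Sbl: "\<And>Q. Q \<in> S \<Longrightarrow> bounded_linear Q"
    using ST vT by (auto simp: von_neumann_algebra_def intro: bop_bl)
  have Sbop: "\<And>Q. Q \<in> S \<Longrightarrow> bounded_op Q"
    using ST vT by (auto simp: von_neumann_algebra_def)
  have Sadj: "\<And>Q a b. Q \<in> S \<Longrightarrow> cinner (Q a) b = cinner a (Q b)"
    using SL by (auto simp: proj_lattice_def is_adjoint_def)
  define K where "K = {z. \<forall>Q\<in>S. Q z = 0}"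
  have "K = (\<Inter>Q\<in>S. {z. Q z = 0})" by (auto simp: K_def)
  moreover have "\<forall>Q\<in>S. closed {z. Q z = 0}"
  proof
    fix Q assume Q: "Q \<in> S"
    have "continuous_on UNIV Q" using bounded_linear.continuous_on[OF Sbl[OF Q] continuous_on_id] by simp
    then show "closed {z. Q z = 0}" by (intro closed_Collect_eq continuous_on_const)
  qed
  ultimately have clK: "closed K" by (simp add: closed_INT)
  have sK: "subsp K" unfolding subsp_def
  proof (intro conjI ballI allI)
    show "0 \<in> K" using Sbl bl_zero by (auto simp: K_def)
    show "\<And>x y. x \<in> K \<Longrightarrow> y \<in> K \<Longrightarrow> x + y \<in> K"
      using Sbl by (auto simp: K_def bl_add)
    fix c x assume x: "x \<in> K"
    show "cscale c x \<in> K" unfolding K_def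
    proof (intro CollectI ballI)
      fix Q assume Q: "Q \<in> S"
      have "Q (cscale c x) = cscale c (Q x)" using Sbop[OF Q] by (simp add: bounded_op_def)
      moreover have "Q x = 0" using x Q by (simp add: K_def)
      ultimately show "Q (cscale c x) = 0" by simp
    qed
  qed
  define Pk where "Pk = proj K"
  define R where "R = (\<lambda>x. x - Pk x)"
  have PkK: "\<And>x. Pk x \<in> K" unfolding Pk_def using proj_props(1)[OF clK sK] .
  have orth: "\<And>w x. w \<in> K \<Longrightarrow> cinner w (R x) = 0"
    unfolding R_def Pk_def using proj_props(2)[OF clK sK] .
  have uniq: "\<And>k x. k \<in> K \<Longrightarrow> \<forall>w\<in>K. cinner w (x - k) = 0 \<Longrightarrow> Pk x = k"
    unfolding Pk_def using proj_unique[OF clK sK] .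
  have Kadd: "\<And>a b. a \<in> K \<Longrightarrow> b \<in> K \<Longrightarrow> a + b \<in> K" using sK by (simp add: subsp_def)
  have Kcs: "\<And>c a. a \<in> K \<Longrightarrow> cscale c a \<in> K" using sK by (simp add: subsp_def)
  have Pk_add: "\<And>x y. Pk (x+y) = Pk x + Pk y"
  proof (rule uniq)
    fix x y
    show "Pk x + Pk y \<in> K" by (intro Kadd PkK)
    have "\<And>w. cinner w (x + y - (Pk x + Pk y)) = cinner w (R x) + cinner w (R y)"
      by (simp add: R_def ci_add_right[symmetric] algebra_simps)
    then show "\<forall>w\<in>K. cinner w (x + y - (Pk x + Pk y)) = 0" using orth by simp
  qed
  have Pk_sc: "\<And>c x. Pk (cscale c x) = cscale c (Pk x)"
  proof (rule uniq)
    fix c x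
    show "cscale c (Pk x) \<in> K" by (intro Kcs PkK)
    have "\<And>w. cinner w (cscale c x - cscale c (Pk x)) = c * cinner w (R x)"
      by (simp add: R_def cs_diff[symmetric] ci_cscale_right)
    then show "\<forall>w\<in>K. cinner w (cscale c x - cscale c (Pk x)) = 0" using orth by simp
  qed
  have R_add: "\<And>x y. R (x+y) = R x + R y" by (simp add: R_def Pk_add)
  have R_sc: "\<And>c x. R (cscale c x) = cscale c (R x)" by (simp add: R_def Pk_sc cs_diff)
  have R_K: "\<And>k. k \<in> K \<Longrightarrow> R k = 0"
  proof -
    fix k assume k: "k \<in> K"
    have "Pk k = k" by (rule uniq[OF k]) simp
    then show "R k = 0" by (simp add: R_def)
  qed
  have decomp: "\<And>x. x = R x + Pk x" by (simp add: R_def)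
  have R_adj: "is_adjoint R R" unfolding is_adjoint_def
  proof (intro allI)
    fix x y
    have o1: "cinner (R x) (Pk y) = 0" by (metis orth[OF PkK] cinner_commute complex_cnj_zero)
    have o2: "cinner (Pk x) (R y) = 0" by (rule orth[OF PkK])
    have "cinner (R x) y = cinner (R x) (R y)"
      using o1 ci_add_right[of "R x" "R y" "Pk y"] decomp[of y] by simp
    moreover have "cinner x (R y) = cinner (R x) (R y)"
      using o2 cinner_add_left[of "R x" "Pk x" "R y"] decomp[of x] by simp
    ultimately show "cinner (R x) y = cinner x (R y)" by simp
  qed
  have RR: "R \<circ> R = R"
  proof
    fix x
    have K0: "0 \<in> K" using sK subsp_def by blast
    have "Pk (R x) = 0" by (rule uniq[OF K0]) (simp add: orth)
    then show "(R \<circ> R) x = R x" by (simp add: R_def)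
  qed
  have Rnorm: "\<And>x. norm (R x) \<le> 1 * norm x"
  proof -
    fix x
    have o1: "cinner (R x) (Pk x) = 0" by (metis orth[OF PkK] cinner_commute complex_cnj_zero)
    have "norm x ^ 2 = norm (R x) ^2 + norm (Pk x)^2"
      using norm_add_sq[of "R x" "Pk x"] o1 decomp[of x] by simp
    then have "norm (R x)^2 \<le> norm x ^2" by simp
    then show "norm (R x) \<le> 1 * norm x" using power2_le_imp_le by simp
  qed
  have Rbop: "bounded_op R" unfolding bounded_op_def using R_add R_sc Rnorm by blast
  have R_comm: "\<And>B. B \<in> commutant T \<Longrightarrow> B \<circ> R = R \<circ> B"
  proof -
    fix B assume B: "B \<in> commutant T"
    have Bbop: "bounded_op B" and Bc: "\<And>A. A \<in> T \<Longrightarrow> A \<circ> B = B \<circ> A"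
      using B by (auto simp: commutant_def)
    have Bbl: "bounded_linear B" by (rule bop_bl[OF Bbop])
    have Bsc: "\<And>c x. B (cscale c x) = cscale c (B x)" using Bbop by (simp add: bounded_op_def)
    have QB: "\<And>Q x. Q \<in> S \<Longrightarrow> Q (B x) = B (Q x)" using Bc ST by (metis comp_apply subsetD)
    have BK: "\<And>k. k \<in> K \<Longrightarrow> B k \<in> K"
    proof -
      fix k assume k: "k \<in> K"
      show "B k \<in> K" unfolding K_def
      proof (intro CollectI ballI)
        fix Q assume Q: "Q \<in> S"
        have "Q k = 0" using k Q by (simp add: K_def)
        then show "Q (B k) = 0" using QB[OF Q] bl_zero[OF Bbl] by simp
      qed
    qed
    have Borth: "\<And>y w. (\<forall>v\<in>K. cinner v y = 0) \<Longrightarrow> w \<in> K \<Longrightarrow> cinner w (B y) = 0"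
    proof -
      fix y w assume y: "\<forall>v\<in>K. cinner v y = 0" and w: "w \<in> K"
      have "\<exists>z. \<forall>x. cinner w (B x) = cinner z x"
      proof (rule riesz)
        show "\<And>x y. cinner w (B (x + y)) = cinner w (B x) + cinner w (B y)"
          using Bbl by (simp add: bl_add ci_add_right)
        show "\<And>c x. cinner w (B (cscale c x)) = c * cinner w (B x)" by (simp add: Bsc ci_cscale_right)
        show "closed {x. cinner w (B x) = 0}" by (rule closed_ker_inner[OF Bbl])
      qed
      then obtain z where z: "\<And>x. cinner w (B x) = cinner z x" by blast
      have zK: "z \<in> K" unfolding K_def
      proof (intro CollectI ballI)
        fix Q assume Q: "Q \<in> S"
        have Qw: "Q w = 0" using w Q by (simp add: K_def)
        have "cinner (Q z) (Q z) = cinner z (Q (Q z))" by (rule Sadj[OF Q])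
        also have "\<dots> = cinner w (B (Q (Q z)))" by (simp add: z)
        also have "\<dots> = cinner w (Q (B (Q z)))" by (simp add: QB[OF Q])
        also have "\<dots> = cinner (Q w) (B (Q z))" by (simp add: Sadj[OF Q])
        also have "\<dots> = 0" by (simp add: Qw)
        finally show "Q z = 0" by (simp add: ci_self_zero)
      qed
      show "cinner w (B y) = 0" using z[of y] y zK by simp
    qed
    show "B \<circ> R = R \<circ> B"
    proof
      fix x
      have "Pk (B x) = B (Pk x)"
      proof (rule uniq)
        show "B (Pk x) \<in> K" by (rule BK[OF PkK])
        have "\<And>w. cinner w (B x - B (Pk x)) = cinner w (B (R x))"
          using Bbl by (simp add: R_def bl_diff)
        then show "\<forall>w\<in>K. cinner w (B x - B (Pk x)) = 0"
          using Borth[of "R x"] orth by simp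
      qed
      then show "(B \<circ> R) x = (R \<circ> B) x" using Bbl by (simp add: R_def bl_diff)
    qed
  qed
  have RT: "R \<in> T"
    by (subst Teq) (simp add: commutant_def Rbop R_comm)
  have RL: "R \<in> proj_lattice T" using RT RR R_adj by (simp add: proj_lattice_def)
  show ?thesis
  proof (intro bexI[OF _ RL] conjI ballI allI impI)
    fix Q assume Q: "Q \<in> S"
    show "proj_le Q R" unfolding proj_le_def
    proof
      fix x
      have "Q (Pk x) = 0" using PkK[of x] Q by (simp add: K_def)
      then show "(Q \<circ> R) x = Q x" using Sbl[OF Q] by (simp add: R_def bl_diff)
    qed
  next
    fix P assume P: "(\<forall>x y. P (x+y) = P x + P y) \<and> (\<forall>Q\<in>S. proj_le Q P)"
    show "proj_le R P" unfolding proj_le_def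
    proof
      fix x
      have "x - P x \<in> K" unfolding K_def
      proof (intro CollectI ballI)
        fix Q assume Q: "Q \<in> S"
        have "Q (P x) = Q x" using P Q by (metis comp_apply proj_le_def)
        then show "Q (x - P x) = 0" using Sbl[OF Q] by (simp add: bl_diff)
      qed
      then have "R (x - P x) = 0" by (rule R_K)
      moreover have "R x = R (x - P x) + R (P x)" using R_add[of "x - P x" "P x"] by simp
      ultimately show "(R \<circ> P) x = R x" by simp
    qed
  qed
qed



lemma delta_props:
  fixes T :: "('a::complex_hilbert \<Rightarrow> 'a) set"
  assumes vT: "von_neumann_algebra T" and Padd: "\<forall>x y. P (x+y) = P x + P y"
  shows "delta_i T P \<in> proj_lattice T"
    and "\<And>Q. Q \<in> proj_lattice T \<Longrightarrow> proj_le Q P \<Longrightarrow> proj_le Q (delta_i T P)"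
    and "proj_le (delta_i T P) P"
proof -
  define L where "L = proj_lattice T"
  define S where "S = {Q \<in> L. proj_le Q P}"
  have LT: "\<And>A. A \<in> L \<Longrightarrow> (\<forall>x y. A (x+y) = A x + A y) \<and> is_adjoint A A"
    using vT by (auto simp: L_def proj_lattice_def von_neumann_algebra_def bounded_op_def)
  obtain R where RL: "R \<in> L" and up: "\<forall>Q\<in>S. proj_le Q R"
    and least: "\<forall>P. (\<forall>x y. P (x+y) = P x + P y) \<and> (\<forall>Q\<in>S. proj_le Q P) \<longrightarrow> proj_le R P"
    using join_exists[OF vT, of S] by (auto simp: S_def L_def)
  have antisym: "\<And>R1 R2. R1 \<in> L \<Longrightarrow> R2 \<in> L \<Longrightarrow> proj_le R1 R2 \<Longrightarrow> proj_le R2 R1 \<Longrightarrow> R1 = R2"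
  proof
    fix R1 R2 x assume a: "R1 \<in> L" "R2 \<in> L" "proj_le R1 R2" "proj_le R2 R1"
    have a1: "\<And>u v. cinner (R1 u) v = cinner u (R1 v)" and a2: "\<And>u v. cinner (R2 u) v = cinner u (R2 v)"
      using LT a(1,2) by (auto simp: is_adjoint_def)
    have e1: "\<And>u. R1 (R2 u) = R1 u" and e2: "\<And>u. R2 (R1 u) = R2 u"
      using a(3,4) by (auto simp: proj_le_def fun_eq_iff)
    have "\<And>y. cinner (R1 x) y = cinner (R2 x) y"
    proof -
      fix y
      have "cinner (R1 x) y = cinner (R1 (R2 x)) y" by (simp add: e1)
      also have "\<dots> = cinner (R2 x) (R1 y)" by (rule a1)
      also have "\<dots> = cinner x (R2 (R1 y))" by (rule a2)
      also have "\<dots> = cinner x (R2 y)" by (simp add: e2)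
      also have "\<dots> = cinner (R2 x) y" by (simp add: a2)
      finally show "cinner (R1 x) y = cinner (R2 x) y" .
    qed
    then have "cinner (R1 x - R2 x) (R1 x - R2 x) = 0" by (simp add: ci_diff_left)
    then show "R1 x = R2 x" by (simp add: ci_self_zero)
  qed
  have pred: "R \<in> L \<and> (\<forall>Q\<in>S. proj_le Q R) \<and> (\<forall>R'\<in>L. (\<forall>Q\<in>S. proj_le Q R') \<longrightarrow> proj_le R R')"
    using RL up least LT by blast
  have eq0: "proj_join L S = R" unfolding proj_join_def
  proof (rule the_equality)
    show "R \<in> L \<and> (\<forall>Q\<in>S. proj_le Q R) \<and> (\<forall>R'\<in>L. (\<forall>Q\<in>S. proj_le Q R') \<longrightarrow> proj_le R R')"
      by (rule pred)
  next
    fix R'' assume h: "R'' \<in> L \<and> (\<forall>Q\<in>S. proj_le Q R'') \<and> (\<forall>R'\<in>L. (\<forall>Q\<in>S. proj_le Q R') \<longrightarrow> proj_le R'' R')"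
    show "R'' = R" using antisym[of R'' R] h pred by blast
  qed
  have eq: "delta_i T P = R" using eq0 by (simp add: delta_i_def L_def S_def)
  show "delta_i T P \<in> proj_lattice T" using eq RL by (simp add: L_def)
  show "\<And>Q. Q \<in> proj_lattice T \<Longrightarrow> proj_le Q P \<Longrightarrow> proj_le Q (delta_i T P)"
    using eq up by (simp add: S_def L_def)
  show "proj_le (delta_i T P) P" using eq least Padd by (simp add: S_def)
qed

theorem lemma1:
  fixes N T :: "('a::complex_hilbert \<Rightarrow> 'a) set"
    and F :: "('a \<Rightarrow> 'a) set"
  assumes "von_neumann_algebra N"
    and "von_neumann_algebra T"
    and "T \<subseteq> N"
    and "proj_filter (proj_lattice T) F"
  shows "{P \<in> proj_lattice N. delta_i T P \<in> F} = cone N F"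
proof
  have Nadd: "\<And>P. P \<in> proj_lattice N \<Longrightarrow> \<forall>x y. P (x+y) = P x + P y"
    using assms(1) by (auto simp: proj_lattice_def von_neumann_algebra_def bounded_op_def)
  have FL: "F \<subseteq> proj_lattice T" and Fup: "\<forall>a\<in>F. \<forall>b\<in>proj_lattice T. proj_le a b \<longrightarrow> b \<in> F"
    using assms(4) by (auto simp: proj_filter_def)
  show "{P \<in> proj_lattice N. delta_i T P \<in> F} \<subseteq> cone N F"
  proof
    fix P assume "P \<in> {P \<in> proj_lattice N. delta_i T P \<in> F}"
    then have P: "P \<in> proj_lattice N" "delta_i T P \<in> F" by auto
    show "P \<in> cone N F" unfolding cone_def
      using P delta_props(3)[OF assms(2) Nadd[OF P(1)]] by blast
  qed
  show "cone N F \<subseteq> {P \<in> proj_lattice N. delta_i T P \<in> F}"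
  proof
    fix Q assume "Q \<in> cone N F"
    then obtain P0 where Q: "Q \<in> proj_lattice N" and P0: "P0 \<in> F" "proj_le P0 Q"
      by (auto simp: cone_def)
    have "proj_le P0 (delta_i T Q)"
      using delta_props(2)[OF assms(2) Nadd[OF Q]] P0 FL by blast
    moreover have "delta_i T Q \<in> proj_lattice T" using delta_props(1)[OF assms(2) Nadd[OF Q]] .
    ultimately have "delta_i T Q \<in> F" using Fup P0(1) by blast
    then show "Q \<in> {P \<in> proj_lattice N. delta_i T P \<in> F}" using Q by simp
  qed
qed

end
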